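(* Let $f_0$ be an arithmetic function, let $m>1$ and $n\ge1$. Then $C_m(n)=C_{m-1}(n)\cdot L_n$; equivalently, for all $1\le k\le n$, \[c_m(n,k)=\sum_{i=k}^n\binom{i-1}{k-1}c_{m-1}(n,i).\]
   Context: An arithmetic function is a function $f_0:\{1,2,\ldots\}\to\mathbb{C}$. For $m\ge 1$, $f_m$ is the invert transform of $f_{m-1}$, i.e. $f_m(n)=f_{m-1}(n)+\sum_{i=1}^{n-1}f_{m-1}(i)f_m(n-i)$ for $n\ge1$. For $m\ge1$ the numbers $c_m(n,k)$, $0\le k\le n$, are defined by $c_m(0,0)=1$, $c_m(n,0)=0$ for $n\ge1$, and $c_m(n,k)=\sum_{i=1}^{n-k+1}f_{m-1}(i)\,c_m(n-i,k-1)$ for $1\le k\le n$. $C_m(n)$ is the $n\times n$ lower triangular matrix whose $(r,k)$ entry is $c_m(r,k)$ for $1\le k\le r\le n$ (and $0$ for $k>r$), and $L_n$ is the $n\times n$ lower triangular Pascal matrix whose $(r,k)$ entry is $\binom{r-1}{k-1}$. *)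

theory Defs
  imports "Jordan_Normal_Form.Matrix"
begin

(* inv_tr f0 m n = f_m(n); arguments n \<ge> 1 are the meaningful ones,
   f0 0 is irrelevant (never used for n \<ge> 1). *)
function inv_tr :: "(nat \<Rightarrow> complex) \<Rightarrow> nat \<Rightarrow> nat \<Rightarrow> complex" where
  "inv_tr f0 0 n = f0 n"
| "inv_tr f0 (Suc m) n =
     inv_tr f0 m n + (\<Sum>i=1..n-1. inv_tr f0 m i * inv_tr f0 (Suc m) (n - i))"
  by pat_completeness auto
termination
  by (relation "measures [\<lambda>(f0,m,n). m, \<lambda>(f0,m,n). n]") auto

(* cc f0 m n k = c_m(n,k) for 0 \<le> k \<le> n (set to 0 for k > n, never used) *)
fun cc :: "(nat \<Rightarrow> complex) \<Rightarrow> nat \<Rightarrow> nat \<Rightarrow> nat \<Rightarrow> complex" where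
  "cc f0 m n 0 = (if n = 0 then 1 else 0)"
| "cc f0 m n (Suc k) =
     (if Suc k \<le> n then (\<Sum>i=1..n - Suc k + 1. inv_tr f0 (m - 1) i * cc f0 m (n - i) k) else 0)"

(* C_m(n): entry (r,k), 1 \<le> r,k \<le> n, stored at 0-based index (r-1,k-1) *)
definition Cmat :: "(nat \<Rightarrow> complex) \<Rightarrow> nat \<Rightarrow> nat \<Rightarrow> complex mat" where
  "Cmat f0 m n = mat n n (\<lambda>(r, k). if k \<le> r then cc f0 m (r + 1) (k + 1) else 0)"

(* Pascal matrix L_n: entry (r,k) = binom(r-1,k-1), 0-based: binom(r,k) *)
definition Lmat :: "nat \<Rightarrow> complex mat" where
  "Lmat n = mat n n (\<lambda>(r, k). of_nat (r choose k))"

end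

theory Submission
  imports Defs "HOL-Computational_Algebra.Formal_Power_Series"
begin

no_notation vec_index (infixl \<open>$\<close> 100)
notation fps_nth (infixl \<open>$\<close> 75)
declare inv_tr.simps[simp del]

definition Fm :: "(nat \<Rightarrow> complex) \<Rightarrow> nat \<Rightarrow> complex fps" where
  "Fm f0 m = Abs_fps (\<lambda>n. if n = 0 then 0 else inv_tr f0 m n)"

definition Aps :: "complex fps" where
  "Aps = Abs_fps (\<lambda>n. if n = 0 then 0 else 1)"

lemma Fm0[simp]: "Fm f0 m $ 0 = 0" by (simp add: Fm_def)

lemma Fmn: "n \<noteq> 0 \<Longrightarrow> Fm f0 m $ n = inv_tr f0 m n" by (simp add: Fm_def)

lemma Frec: "Fm f0 (Suc m) = Fm f0 m + Fm f0 m * Fm f0 (Suc m)"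
proof (rule fps_ext)
  fix n
  show "Fm f0 (Suc m) $ n = (Fm f0 m + Fm f0 m * Fm f0 (Suc m)) $ n"
  proof (cases "n = 0")
    case True then show ?thesis by simp
  next
    case False
    have "(Fm f0 m * Fm f0 (Suc m)) $ n = (\<Sum>i=0..n. Fm f0 m $ i * Fm f0 (Suc m) $ (n - i))"
      by (rule fps_mult_nth)
    also have "\<dots> = (\<Sum>i=1..n-1. Fm f0 m $ i * Fm f0 (Suc m) $ (n - i))"
    proof -
      have "{0..n} = insert 0 (insert n {1..n-1})" using False by auto
      then show ?thesis using False by simp
    qed
    also have "\<dots> = (\<Sum>i=1..n-1. inv_tr f0 m i * inv_tr f0 (Suc m) (n - i))"
      by (rule sum.cong) (auto simp: Fmn)
    finally have e: "(Fm f0 m * Fm f0 (Suc m)) $ n = (\<Sum>i=1..n-1. inv_tr f0 m i * inv_tr f0 (Suc m) (n - i))" .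
    have "Fm f0 (Suc m) $ n = inv_tr f0 (Suc m) n" using False by (rule Fmn)
    also have "\<dots> = inv_tr f0 m n + (\<Sum>i=1..n-1. inv_tr f0 m i * inv_tr f0 (Suc m) (n - i))"
      by (rule inv_tr.simps(2))
    finally show ?thesis using e False by (simp add: Fmn)
  qed
qed

lemma pow_low: "(F::complex fps) $ 0 = 0 \<Longrightarrow> j < k \<Longrightarrow> (F ^ k) $ j = 0"
proof (induction k arbitrary: j)
  case 0 then show ?case by simp
next
  case (Suc k)
  have "(F ^ Suc k) $ j = (\<Sum>i=0..j. F $ i * (F ^ k) $ (j - i))" by (simp add: fps_mult_nth)
  also have "\<dots> = 0"
  proof (rule sum.neutral, intro ballI)
    fix i assume i: "i \<in> {0..j}"
    show "F $ i * (F ^ k) $ (j - i) = 0"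
    proof (cases "i = 0")
      case True then show ?thesis using Suc.prems by simp
    next
      case False then have "(F ^ k) $ (j - i) = 0" using Suc.prems i by (intro Suc.IH) auto
      then show ?thesis by simp
    qed
  qed
  finally show ?case .
qed

lemma cc_eq: "cc f0 m n k = (Fm f0 (m - 1) ^ k) $ n"
proof (induction k arbitrary: n)
  case 0 then show ?case by simp
next
  case (Suc k)
  let ?F = "Fm f0 (m - 1)"
  have e: "(?F ^ Suc k) $ n = (\<Sum>i=0..n. ?F $ i * (?F ^ k) $ (n - i))" by (simp add: fps_mult_nth)
  show ?case
  proof (cases "Suc k \<le> n")
    case True
    have "(\<Sum>i=0..n. ?F $ i * (?F ^ k) $ (n - i)) = (\<Sum>i=1..n. ?F $ i * (?F ^ k) $ (n - i))"
      by (simp add: sum.atLeast_Suc_atMost)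
    also have "\<dots> = (\<Sum>i=1..n - Suc k + 1. ?F $ i * (?F ^ k) $ (n - i))"
    proof -
      have s: "{1..n} = {1..n - Suc k + 1} \<union> {n - Suc k + 2..n}" using True by auto
      have "(\<Sum>i\<in>{n - Suc k + 2..n}. ?F $ i * (?F ^ k) $ (n - i)) = 0"
        by (rule sum.neutral) (auto intro!: pow_low)
      then show ?thesis unfolding s by (subst sum.union_disjoint) auto
    qed
    also have "\<dots> = (\<Sum>i=1..n - Suc k + 1. inv_tr f0 (m - 1) i * cc f0 m (n - i) k)"
      by (rule sum.cong) (auto simp: Fmn Suc.IH)
    finally show ?thesis using True e by simp
  next
    case False
    then show ?thesis by (metis pow_low Fm0 not_le cc.simps(2))
  qed
qed

lemma Aps_mult: "Aps * (1 - fps_X) = fps_X"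
proof (rule fps_ext)
  fix n
  show "(Aps * (1 - fps_X)) $ n = fps_X $ n"
  proof (cases n)
    case 0 then show ?thesis by (simp add: Aps_def)
  next
    case (Suc n')
    have "(Aps * (1 - fps_X)) $ n = Aps $ n - (Aps * fps_X) $ n" by (simp add: algebra_simps)
    also have "\<dots> = (if n = 1 then 1 else 0)" using Suc by (simp add: Aps_def)
    finally show ?thesis using Suc by (simp add: fps_X_def)
  qed
qed

lemma H_compose: "Fm f0 (Suc m) = Aps oo Fm f0 m"
proof -
  let ?G = "Fm f0 m" and ?H = "Fm f0 (Suc m)"
  have "(Aps oo ?G) * (1 - ?G) = (Aps * (1 - fps_X)) oo ?G"
    by (simp add: fps_compose_mult_distrib fps_compose_sub_distrib)
  also have "\<dots> = ?G" by (simp add: Aps_mult)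
  also have "?G = ?H * (1 - ?G)" using Frec[of f0 m] by (simp add: algebra_simps)
  finally have eq: "(Aps oo ?G) * (1 - ?G) = ?H * (1 - ?G)" .
  have "1 - ?G \<noteq> 0"
  proof
    assume "1 - ?G = 0"
    then have "(1 - ?G) $ 0 = 0" by simp
    then show False by simp
  qed
  with eq show ?thesis by simp
qed

lemma Aps_pow: "(Aps ^ Suc k) $ Suc j = of_nat (j choose k)"
proof (induction k arbitrary: j)
  case 0 then show ?case by (simp add: Aps_def)
next
  case (Suc k)
  have "(Aps ^ Suc (Suc k)) $ Suc j = (\<Sum>i=0..Suc j. Aps $ i * (Aps ^ Suc k) $ (Suc j - i))"
    by (simp add: fps_mult_nth)
  also have "\<dots> = (\<Sum>i=1..Suc j. (Aps ^ Suc k) $ (Suc j - i))"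
    by (simp add: sum.atLeast_Suc_atMost Aps_def)
  also have "\<dots> = (\<Sum>i=1..j. (Aps ^ Suc k) $ (Suc j - i))"
    by (simp add: pow_low Aps_def)
  also have "\<dots> = (\<Sum>t<j. (Aps ^ Suc k) $ Suc t)"
  proof (rule sum.reindex_bij_witness[where i="\<lambda>t. j - t" and j="\<lambda>i. j - i"])
  qed (auto simp: Suc_diff_le)
  also have "\<dots> = (\<Sum>t<j. of_nat (t choose k))" using Suc.IH by (simp del: power_Suc)
  also have "\<dots> = of_nat (j choose Suc k)"
  proof (cases j)
    case 0 then show ?thesis by simp
  next
    case (Suc j')
    have "(\<Sum>t<j. t choose k) = (\<Sum>t\<le>j'. t choose k)" using Suc lessThan_Suc_atMost by simp
    also have "\<dots> = j choose Suc k" using Suc sum_choose_upper by simp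
    finally show ?thesis by (metis of_nat_sum)
  qed
  finally show ?case .
qed


lemma coef:
  assumes "r < M"
  shows "(Fm f0 (Suc m) ^ Suc k) $ Suc r
         = (\<Sum>j<M. (Fm f0 m ^ Suc j) $ Suc r * of_nat (j choose k))"
proof -
  let ?G = "Fm f0 m"
  have "Fm f0 (Suc m) ^ Suc k = Aps ^ Suc k oo ?G"
    by (simp only: H_compose fps_compose_power[OF Fm0])
  then have "(Fm f0 (Suc m) ^ Suc k) $ Suc r = (\<Sum>i=0..Suc r. (Aps ^ Suc k) $ i * (?G ^ i) $ Suc r)"
    by (simp only: fps_compose_nth)
  also have "\<dots> = (\<Sum>i=Suc 0..Suc r. (Aps ^ Suc k) $ i * (?G ^ i) $ Suc r)"
    by (subst sum.atLeast_Suc_atMost) (auto simp: pow_low Aps_def simp del: power_Suc)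
  also have "\<dots> = (\<Sum>j=0..r. (Aps ^ Suc k) $ Suc j * (?G ^ Suc j) $ Suc r)"
    by (subst sum.shift_bounds_cl_Suc_ivl[symmetric]) simp
  also have "\<dots> = (\<Sum>j=0..r. (?G ^ Suc j) $ Suc r * of_nat (j choose k))"
    by (rule sum.cong) (simp_all only: Aps_pow mult.commute)
  also have "\<dots> = (\<Sum>j<M. (?G ^ Suc j) $ Suc r * of_nat (j choose k))"
  proof (rule sum.mono_neutral_left)
    show "\<forall>j\<in>{..<M} - {0..r}. (?G ^ Suc j) $ Suc r * of_nat (j choose k) = 0"
      by (auto intro!: pow_low simp del: power_Suc)
  qed (use assms in auto)
  finally show ?thesis .
qed

lemma Cmat_entry: "cc f0 m (Suc i) (Suc j) = (Fm f0 (m - 1) ^ Suc j) $ Suc i"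
  by (rule cc_eq)

theorem proposition6:
  fixes f0 :: "nat \<Rightarrow> complex" and m n :: nat
  assumes "m > 1" and "n \<ge> 1"
  shows "Cmat f0 m n = Cmat f0 (m - 1) n * Lmat n"
proof (rule eq_matI)
  define m' where "m' = m - 2"
  have m': "m = Suc (Suc m')" using assms(1) by (simp add: m'_def)
  have m1: "m - 1 = Suc m'" using m' by simp
  have m2: "m - 1 - 1 = m'" using m' by simp
  have gen: "(if j \<le> i then cc f0 mm (i + 1) (j + 1) else 0) = (Fm f0 (mm - 1) ^ Suc j) $ Suc i" for mm i j
  proof (cases "j \<le> i")
    case True then show ?thesis using cc_eq[of f0 mm "Suc i" "Suc j"] by simp
  next
    case False
    then have "(Fm f0 (mm - 1) ^ Suc j) $ Suc i = 0" by (intro pow_low) auto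
    then show ?thesis using False by simp
  qed
  fix i j assume ij: "i < dim_row (Cmat f0 (m - 1) n * Lmat n)" "j < dim_col (Cmat f0 (m - 1) n * Lmat n)"
  then have i: "i < n" and j: "j < n" by (simp_all add: Cmat_def Lmat_def)
  have L: "Cmat f0 m n $$ (i, j) = (Fm f0 (Suc m') ^ Suc j) $ Suc i"
  proof -
    have "Cmat f0 m n $$ (i, j) = (if j \<le> i then cc f0 m (i + 1) (j + 1) else 0)"
      using i j by (simp add: Cmat_def)
    also have "\<dots> = (Fm f0 (Suc m') ^ Suc j) $ Suc i"
      by (simp only: gen m1)
    finally show ?thesis .
  qed
  have R: "(Cmat f0 (m - 1) n * Lmat n) $$ (i, j)
      = (\<Sum>t<n. (Fm f0 m' ^ Suc t) $ Suc i * of_nat (t choose j))"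
  proof -
    have "(Cmat f0 (m - 1) n * Lmat n) $$ (i, j) = (\<Sum>t<n. Cmat f0 (m - 1) n $$ (i, t) * Lmat n $$ (t, j))"
      using i j by (simp add: Cmat_def Lmat_def scalar_prod_def lessThan_atLeast0)
    also have "\<dots> = (\<Sum>t<n. (Fm f0 m' ^ Suc t) $ Suc i * of_nat (t choose j))"
    proof (rule sum.cong)
      fix t assume t: "t \<in> {..<n}"
      have "Cmat f0 (m - 1) n $$ (i, t) = (if t \<le> i then cc f0 (m - 1) (i + 1) (t + 1) else 0)"
        using i t by (simp add: Cmat_def)
      also have "\<dots> = (Fm f0 m' ^ Suc t) $ Suc i"
        by (simp only: gen m2)
      finally have c: "Cmat f0 (m - 1) n $$ (i, t) = (Fm f0 m' ^ Suc t) $ Suc i" .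
      have l: "Lmat n $$ (t, j) = of_nat (t choose j)" using t j by (simp add: Lmat_def)
      show "Cmat f0 (m - 1) n $$ (i, t) * Lmat n $$ (t, j) = (Fm f0 m' ^ Suc t) $ Suc i * of_nat (t choose j)"
        by (simp only: c l)
    qed simp
    finally show ?thesis .
  qed
  show "Cmat f0 m n $$ (i, j) = (Cmat f0 (m - 1) n * Lmat n) $$ (i, j)"
    unfolding L R by (rule coef[OF i])
qed (simp_all add: Cmat_def Lmat_def)

end
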